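(* Let $M_t$ be the spherical mean curvature flow of isoparametric hypersurfaces in $S^{n+1}$ with $g$ distinct principal curvatures, with $M_0$ not minimal, and let $A(t),H(t)$ be its shape operator and scalar mean curvature. (1) If $g=1$, then $\|A(t)\|^2/H^2(t)\equiv 1/n$. (2) If $g\ge 2$, there exist $t_1>0$ and positive constants $c_1,c_2$ such that $$c_2e^{-2gnt}\le\frac{\|A(t)\|^2}{H^2(t)}\le c_1e^{-2gnt}\quad\text{for all } t<-t_1.$$
   Context: Let $M^n$ be a compact isoparametric hypersurface in the unit sphere $S^{n+1}\subset\mathbb{R}^{n+2}$ (constant principal curvatures) with $g$ distinct principal curvatures; then $g\in\{1,2,3,4,6\}$. Fix $x_0\in M$ and identify the 2-dimensional normal space $\nu_{x_0}M$ of $M$ in $\mathbb{R}^{n+2}$ with $\mathbb{C}$ so that the two focal submanifolds $M_+$, $M_-$ ($\dim M_+\le\dim M_-$) meet the normal circle at $1$ and $e^{i\pi/g}$ (the intersection points closest to $x_0$). The Weyl chamber is $C=\{re^{i\theta}:r>0,\ 0<\theta<\pi/g\}$. For $k=1,\dots,g$ let $\theta_k=k\pi/g-\pi/2$, $\alpha_k=e^{i\theta_k}$, and $m_k=m_1$ for $k$ odd, $m_k=m_2$ for $k$ even, where $(m_1,m_2)$, $m_1\le m_2$, is the multiplicity data of the principal curvatures; $m_1=m_2$ if $g$ is odd, and $(m_1+m_2)g=2n$. For $x\in C$, $M_x=\{p+\tilde\xi(p):p\in M\}$ where $\tilde\xi$ is the parallel normal field on $M$ with $\tilde\xi(x_0)=x-x_0$;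 it is an $n$-dimensional isoparametric submanifold of $\mathbb{R}^{n+2}$ lying in $S^{n+1}(|x|)$, with normal space $\nu_{x_0}M$ at $x$, and $T_xM_x=\oplus_kE_k$, $\dim E_k=m_k$, with Euclidean shape operator $A_\xi|_{E_k}=\langle\xi,-\alpha_k/\langle x,\alpha_k\rangle\rangle\mathrm{Id}$ ($\langle\cdot,\cdot\rangle$ the real inner product on $\mathbb{C}=\mathbb{R}^2$). $H^E(x),A^E(x)$ denote mean curvature vector and shape operator of $M_x$ at $x$ in $\mathbb{R}^{n+2}$; $H^S(x),A^S(x)$ those of $M_x$ as a hypersurface of $S^{n+1}(|x|)$; $\|A\|^2$ is the sum of squared Hilbert–Schmidt norms over an orthonormal normal basis. Set $\delta=(m_2-m_1)/(m_2+m_1)$ if $g\ge2$ and $\delta=0$ if $g=1$, and let $\theta_{\min}\in(0,\pi/g)$ be defined by $\cos g\theta_{\min}=-\delta$. The spherical MCF of $M_{y(0)}$ is the family $M_t=M_{y(t)}$ with $y(t)\in C$ unit and $y'(t)=H^S(y(t))$; it exists for all $t\le 0$; $A(t)=A^S(y(t))$ and $H^2(t)=\|H^S(y(t))\|^2$. *)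

theory Defs
  imports "HOL-Analysis.Analysis"
begin

text \<open>Model of the normal plane \<open>\<nu>_{x_0}M\<close> as the complex plane (with the real inner
  product on \<open>\<complex> = \<real>^2\<close>).\<close>

definition weyl_chamber :: "nat \<Rightarrow> complex set" where
  "weyl_chamber g = {of_real r * cis \<theta> | r \<theta>. r > 0 \<and> 0 < \<theta> \<and> \<theta> < pi / real g}"

definition iso_theta :: "nat \<Rightarrow> nat \<Rightarrow> real" where
  "iso_theta g k = real k * pi / real g - pi / 2"

definition iso_alpha :: "nat \<Rightarrow> nat \<Rightarrow> complex" where
  "iso_alpha g k = cis (iso_theta g k)"

definition iso_mult :: "nat \<Rightarrow> nat \<Rightarrow> nat \<Rightarrow> nat" where
  "iso_mult m1 m2 k = (if odd k then m1 else m2)"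

text \<open>unit normal of \<open>M_x\<close> in the sphere \<open>S^{n+1}(|x|)\<close> at \<open>x\<close>: the unit vector of the
  normal plane orthogonal to \<open>x\<close>\<close>
definition sph_normal :: "complex \<Rightarrow> complex" where
  "sph_normal x = \<i> * x / of_real (cmod x)"

text \<open>Euclidean shape operator: \<open>A_\<xi>|E_k = \<langle>\<xi>, -\<alpha>_k/\<langle>x,\<alpha>_k\<rangle>\<rangle> Id\<close>\<close>
definition shape_eig :: "nat \<Rightarrow> nat \<Rightarrow> complex \<Rightarrow> complex \<Rightarrow> real" where
  "shape_eig g k x \<xi> = \<xi> \<bullet> (- iso_alpha g k / of_real (x \<bullet> iso_alpha g k))"

definition sph_princ :: "nat \<Rightarrow> nat \<Rightarrow> complex \<Rightarrow> real" where
  "sph_princ g k x = shape_eig g k x (sph_normal x)"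

definition sph_normA2 :: "nat \<Rightarrow> nat \<Rightarrow> nat \<Rightarrow> complex \<Rightarrow> real" where
  "sph_normA2 g m1 m2 x = (\<Sum>k=1..g. real (iso_mult m1 m2 k) * (sph_princ g k x)^2)"

definition sph_H :: "nat \<Rightarrow> nat \<Rightarrow> nat \<Rightarrow> complex \<Rightarrow> real" where
  "sph_H g m1 m2 x = (\<Sum>k=1..g. real (iso_mult m1 m2 k) * sph_princ g k x)"

definition sph_Hvec :: "nat \<Rightarrow> nat \<Rightarrow> nat \<Rightarrow> complex \<Rightarrow> complex" where
  "sph_Hvec g m1 m2 x = of_real (sph_H g m1 m2 x) * sph_normal x"

definition iso_data :: "nat \<Rightarrow> nat \<Rightarrow> nat \<Rightarrow> nat \<Rightarrow> bool" where
  "iso_data g m1 m2 n \<longleftrightarrow> g \<in> {1,2,3,4,6} \<and> 1 \<le> m1 \<and> m1 \<le> m2 \<and>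
      (odd g \<longrightarrow> m1 = m2) \<and> (m1 + m2) * g = 2 * n"

text \<open>spherical MCF \<open>M_t = M_{y(t)}\<close>, \<open>t \<le> 0\<close>\<close>
definition sph_MCF :: "nat \<Rightarrow> nat \<Rightarrow> nat \<Rightarrow> (real \<Rightarrow> complex) \<Rightarrow> bool" where
  "sph_MCF g m1 m2 y \<longleftrightarrow> (\<forall>t\<le>0. y t \<in> weyl_chamber g \<and> cmod (y t) = 1 \<and>
      (y has_vector_derivative sph_Hvec g m1 m2 (y t)) (at t within {..0}))"

end

theory Submission
  imports Defs
begin

lemma princ_cis:
  "sph_princ g k (cis \<theta>) = - cos (\<theta> - real k * pi / real g) / sin (\<theta> - real k * pi / real g)"
proof -
  define a where "a = real k * pi / real g"
  have th: "iso_theta g k = a - pi/2" by (simp add: iso_theta_def a_def)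
  have c1: "cos (a - pi/2) = sin a" "sin (a - pi/2) = - cos a" by (simp_all add: cos_diff sin_diff)
  have "sph_princ g k (cis \<theta>) = (cos \<theta> * cos a + sin \<theta> * sin a) / (cos \<theta> * sin a - sin \<theta> * cos a)"
    unfolding sph_princ_def shape_eig_def sph_normal_def iso_alpha_def th
    by (simp add: inner_complex_def c1 add_divide_distrib diff_divide_distrib algebra_simps)
  also have "\<dots> = - cos (\<theta> - a) / sin (\<theta> - a)"
    using minus_divide_divide[of "cos \<theta> * cos a + sin \<theta> * sin a" "cos \<theta> * sin a - sin \<theta> * cos a"]
    by (simp add: cos_diff sin_diff algebra_simps)
  finally show ?thesis by (simp add: a_def)
qed

lemma sin_shift_neg:
  assumes "1 \<le> k" "k \<le> g" "0 < \<theta>" "\<theta> < pi / real g"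
  shows "sin (\<theta> - real k * pi / real g) < 0"
proof -
  have g0: "real g > 0" using assms by simp
  have "\<theta> - real k * pi / real g < 0"
  proof -
    have "pi / real g \<le> real k * pi / real g" using assms g0 by (simp add: divide_right_mono)
    thus ?thesis using assms by simp
  qed
  moreover have "\<theta> - real k * pi / real g > - pi"
  proof -
    have "real k * pi / real g \<le> pi" using assms g0 by (simp add: field_simps)
    thus ?thesis using assms by simp
  qed
  ultimately have "sin (-(\<theta> - real k * pi / real g)) > 0"
    by (intro sin_gt_zero) auto
  thus ?thesis using sin_minus[of "\<theta> - real k * pi / real g"] by simp
qed

lemma cos_120: "cos (2*pi/3) = -1/2" and sin_120: "sin (2*pi/3) = sqrt 3/2"
proof -
  have "2*pi/3 = pi - pi/3" by simp
  thus "cos (2*pi/3) = -1/2" "sin (2*pi/3) = sqrt 3/2" by (simp_all only: cos_pi_minus sin_pi_minus cos_60 sin_60)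
qed

lemma cos_150: "cos (5*pi/6) = -sqrt 3/2" and sin_150: "sin (5*pi/6) = 1/2"
proof -
  have "5*pi/6 = pi - pi/6" by simp
  thus "cos (5*pi/6) = -sqrt 3/2" "sin (5*pi/6) = 1/2" by (simp_all only: cos_pi_minus sin_pi_minus cos_30 sin_30)
qed

lemma cos_135: "cos (3*pi/4) = -sqrt 2/2" and sin_135: "sin (3*pi/4) = sqrt 2/2"
proof -
  have "3*pi/4 = pi - pi/4" by simp
  thus "cos (3*pi/4) = -sqrt 2/2" "sin (3*pi/4) = sqrt 2/2" by (simp_all only: cos_pi_minus sin_pi_minus cos_45 sin_45)
qed

lemma princ_mul:
  assumes "1 \<le> k" "k \<le> g" "0 < \<theta>" "\<theta> < pi / real g"
  shows "sph_princ g k (cis \<theta>) * sin (\<theta> - real k * pi / real g) = - cos (\<theta> - real k * pi / real g)"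
  using sin_shift_neg[OF assms] by (simp add: princ_cis)

lemma half_scale: "(p::real) * (X/2) = Y/2 \<Longrightarrow> p * X = Y" by simp

lemma alg4:
  fixes p1 p2 p3 p4 c s r a b SS CC :: real
  assumes "p1 * (s * r - c * r) = - (c * r + s * r)"
  "p2 * c = s"
  "p3 * (- s * r - c * r) = - (- c * r + s * r)"
  "p4 * s = - c"
  "c^2 + s^2 = 1" "r^2 = 2"
  "SS = 2 * (2 * s * c) * (c^2 - s^2)"
  "CC = (c^2 - s^2)^2 - (2 * s * c)^2"
  "(s * r - c * r) \<noteq> 0" "c \<noteq> 0" "(- s * r - c * r) \<noteq> 0" "s \<noteq> 0"
  shows "(a * p1 + b * p2 + a * p3 + b * p4) * SS = -2 * (a * (CC - 1) + b * (CC + 1))"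
proof -
  have "((a * p1 + b * p2 + a * p3 + b * p4) * (2 * (2 * s * c) * (c^2 - s^2)) + 2 * (a * ((c^2 - s^2)^2 - (2 * s * c)^2 - 1) + b * ((c^2 - s^2)^2 - (2 * s * c)^2 + 1)))
    * ((s * r - c * r) * c * (- s * r - c * r) * s) = 0"
  using assms(1-6) by algebra
  hence "((a * p1 + b * p2 + a * p3 + b * p4) * SS + 2 * (a * (CC - 1) + b * (CC + 1)))
    * ((s * r - c * r) * c * (- s * r - c * r) * s) = 0"
    unfolding assms(7,8) .
  thus ?thesis using assms(9-12) by simp
qed
lemma alg3:
  fixes p1 p2 p3 c s r a SS CC :: real
  assumes "p1 * (s - c * r) = - (c + s * r)"
  "p2 * (- s - c * r) = - (- c + s * r)"
  "p3 * s = - c"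
  "c^2 + s^2 = 1" "r^2 = 3"
  "SS = 2 * s * c * c + (c^2 - s^2) * s"
  "CC = (c^2 - s^2) * c - 2 * s * c * s"
  "(s - c * r) \<noteq> 0" "(- s - c * r) \<noteq> 0" "s \<noteq> 0"
  shows "(a * p1 + a * p2 + a * p3) * SS = -(3/2) * (a * (CC - 1) + a * (CC + 1))"
proof -
  have "((a * p1 + a * p2 + a * p3) * (2 * s * c * c + (c^2 - s^2) * s) + 3 * a * ((c^2 - s^2) * c - 2 * s * c * s))
    * ((s - c * r) * (- s - c * r) * s) = 0"
  using assms(1-5) by algebra
  hence "((a * p1 + a * p2 + a * p3) * SS + 3 * a * CC) * ((s - c * r) * (- s - c * r) * s) = 0"
    unfolding assms(6,7) .
  hence "(a * p1 + a * p2 + a * p3) * SS + 3 * a * CC = 0" using assms(8-10) by simp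
  thus ?thesis by (simp add: algebra_simps)
qed
lemma alg2:
  fixes p1 p2 c s a b SS CC :: real
  assumes "p1 * c = s" "p2 * s = - c" "c^2 + s^2 = 1"
  "SS = 2 * s * c" "CC = c^2 - s^2" "c \<noteq> 0" "s \<noteq> 0"
  shows "(a * p1 + b * p2) * SS = -(2/2) * (a * (CC - 1) + b * (CC + 1))"
proof -
  have "(a * p1 + b * p2) * (2 * s * c) = 2 * a * (p1 * c) * s + 2 * b * (p2 * s) * c" by (simp add: algebra_simps)
  also have "\<dots> = -(2/2) * (a * ((c^2 - s^2) - 1) + b * ((c^2 - s^2) + 1))"
    unfolding assms(1,2) using assms(3) by algebra
  finally show ?thesis unfolding assms(4,5) .
qed
lemma alg1:
  fixes p1 c s a :: real
  assumes "p1 * s = - c" "s \<noteq> 0"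
  shows "(a * p1) * s = -(1/2) * (a * (c - 1) + a * (c + 1))"
  using assms by (simp add: algebra_simps)

lemma alg6:
  fixes p1 p2 p3 p4 p5 p6 c s r a b SS CC :: real
  assumes "p1 * (s * r - c) = - (c * r + s)"
  "p2 * (s - c * r) = - (c + s * r)"
  "p3 * c = s"
  "p4 * (- s - c * r) = - (- c + s * r)"
  "p5 * (- s * r - c) = - (- c * r + s)"
  "p6 * s = - c"
  "c^2 + s^2 = 1" "r^2 = 3"
  "SS = 2 * (2 * s * c * c + (c^2 - s^2) * s) * ((c^2 - s^2) * c - 2 * s * c * s)"
  "CC = ((c^2 - s^2) * c - 2 * s * c * s)^2 - (2 * s * c * c + (c^2 - s^2) * s)^2"
  "(s * r - c) \<noteq> 0" "(s - c * r) \<noteq> 0" "c \<noteq> 0" "(- s - c * r) \<noteq> 0" "(- s * r - c) \<noteq> 0" "s \<noteq> 0"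
  shows "(a * p1 + b * p2 + a * p3 + b * p4 + a * p5 + b * p6) * SS = -3 * (a * (CC - 1) + b * (CC + 1))"
proof -
  have "((a * p1 + b * p2 + a * p3 + b * p4 + a * p5 + b * p6) * (2 * (2 * s * c * c + (c^2 - s^2) * s) * ((c^2 - s^2) * c - 2 * s * c * s))
   + 3 * (a * (((c^2 - s^2) * c - 2 * s * c * s)^2 - (2 * s * c * c + (c^2 - s^2) * s)^2 - 1) + b * (((c^2 - s^2) * c - 2 * s * c * s)^2 - (2 * s * c * c + (c^2 - s^2) * s)^2 + 1)))
  * ((s * r - c) * (s - c * r) * c * (- s - c * r) * (- s * r - c) * s) = 0"
  using assms(1-8) by algebra
  hence "((a * p1 + b * p2 + a * p3 + b * p4 + a * p5 + b * p6) * SS + 3 * (a * (CC - 1) + b * (CC + 1)))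
    * ((s * r - c) * (s - c * r) * c * (- s - c * r) * (- s * r - c) * s) = 0"
    unfolding assms(9,10) .
  thus ?thesis using assms(11-16) by simp
qed

lemma H6:
  assumes "0 < \<theta>" "\<theta> < pi / 6"
  shows "sph_H 6 m1 m2 (cis \<theta>) * sin (6*\<theta>) = -3 * (m1*(cos (6*\<theta>)-1) + m2*(cos (6*\<theta>)+1))"
proof -
  have a: "0 < \<theta>" "\<theta> < pi / real (6::nat)" using assms by auto
  note pm = princ_mul[OF _ _ a] and sn = sin_shift_neg[OF _ _ a]
  define c where "c = cos \<theta>"
  define s where "s = sin \<theta>"
  define r where "r = sqrt 3"
  have cs: "c^2+s^2 = 1" by (simp add: c_def s_def)
  have r2: "r^2 = 3" by (simp add: r_def)
  have v: "real 1 * pi / real 6 = pi/6" "real 2 * pi / real 6 = pi/3" "real 3 * pi / real 6 = pi/2"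
     "real 4 * pi / real 6 = 2*pi/3" "real 5 * pi / real 6 = 5*pi/6" "real 6 * pi / real 6 = pi"
    by simp_all
  have e1h: "sph_princ 6 1 (cis \<theta>) * (s*(r/2) - c*(1/2)) = -(c*(r/2) + s*(1/2))"
   and d1h: "s*(r/2) - c*(1/2) < 0"
    using pm[of 1] sn[of 1] unfolding v by (simp_all add: sin_diff cos_diff cos_30 sin_30 c_def s_def r_def)
  have e1: "sph_princ 6 1 (cis \<theta>) * (s * r - c) = -(c * r + s)" using e1h by (simp add: algebra_simps)
  have d1: "s * r - c \<noteq> 0" using d1h by (simp add: algebra_simps)
  have e2h: "sph_princ 6 2 (cis \<theta>) * (s*(1/2) - c*(r/2)) = -(c*(1/2) + s*(r/2))"
   and d2h: "s*(1/2) - c*(r/2) < 0"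
    using pm[of 2] sn[of 2] unfolding v by (simp_all add: sin_diff cos_diff cos_60 sin_60 c_def s_def r_def)
  have e2: "sph_princ 6 2 (cis \<theta>) * (s - c * r) = -(c + s * r)" using e2h by (simp add: algebra_simps)
  have d2: "s - c * r \<noteq> 0" using d2h by (simp add: algebra_simps)
  have e3: "sph_princ 6 3 (cis \<theta>) * c = s"
   and d3: "c \<noteq> 0"
    using pm[of 3] sn[of 3] unfolding v by (simp_all add: sin_diff cos_diff c_def s_def r_def)
  have e4h: "sph_princ 6 4 (cis \<theta>) * (s*(-1/2) - c*(r/2)) = -(c*(-1/2) + s*(r/2))"
   and d4h: "s*(-1/2) - c*(r/2) < 0"
    using pm[of 4] sn[of 4] unfolding v by (simp_all add: sin_diff cos_diff cos_120 sin_120 c_def s_def r_def)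
  have e4: "sph_princ 6 4 (cis \<theta>) * (- s - c * r) = - (- c + s * r)" using e4h by (simp add: algebra_simps)
  have d4: "- s - c * r \<noteq> 0" using d4h by (simp add: algebra_simps)
  have e5h: "sph_princ 6 5 (cis \<theta>) * (s*(-r/2) - c*(1/2)) = -(c*(-r/2) + s*(1/2))"
   and d5h: "s*(-r/2) - c*(1/2) < 0"
    using pm[of 5] sn[of 5] unfolding v by (simp_all add: sin_diff cos_diff cos_150 sin_150 c_def s_def r_def)
  have e5: "sph_princ 6 5 (cis \<theta>) * (- s * r - c) = - (- c * r + s)" using e5h by (simp add: algebra_simps)
  have d5: "- s * r - c \<noteq> 0" using d5h by (simp add: algebra_simps)
  have e6: "sph_princ 6 6 (cis \<theta>) * s = - c"
   and d6: "s \<noteq> 0"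
    using pm[of 6] sn[of 6] unfolding v by (simp_all add: sin_diff cos_diff c_def s_def r_def)
  have S2: "sin (2*\<theta>) = 2 * s * c" and C2: "cos (2*\<theta>) = c^2 - s^2"
    by (simp_all add: sin_double cos_double c_def s_def)
  have S3: "sin (3*\<theta>) = sin (2*\<theta>) * c + cos (2*\<theta>) * s" and C3: "cos (3*\<theta>) = cos (2*\<theta>) * c - sin (2*\<theta>) * s"
    using sin_add[of "2*\<theta>" \<theta>] cos_add[of "2*\<theta>" \<theta>] by (simp_all add: c_def s_def algebra_simps)
  have S6: "sin (6*\<theta>) = 2 * sin (3*\<theta>) * cos (3*\<theta>)" and C6: "cos (6*\<theta>) = cos (3*\<theta>)^2 - sin (3*\<theta>)^2"
    using sin_double[of "3*\<theta>"] cos_double[of "3*\<theta>"] by simp_all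
  have sumH: "sph_H 6 m1 m2 (cis \<theta>) = m1 * sph_princ 6 1 (cis \<theta>) + m2 * sph_princ 6 2 (cis \<theta>)
      + m1 * sph_princ 6 3 (cis \<theta>) + m2 * sph_princ 6 4 (cis \<theta>) + m1 * sph_princ 6 5 (cis \<theta>)
      + m2 * sph_princ 6 6 (cis \<theta>)"
  proof -
    have "{1..6::nat} = {1,2,3,4,5,6}" by auto
    thus ?thesis by (simp add: sph_H_def iso_mult_def)
  qed
  show ?thesis unfolding sumH
    by (rule alg6[OF e1 e2 e3 e4 e5 e6 cs r2 _ _ d1 d2 d3 d4 d5 d6])
       (simp_all add: S6 C6 S3 C3 S2 C2)
qed

lemma H4:
  assumes "0 < \<theta>" "\<theta> < pi / 4"
  shows "sph_H 4 m1 m2 (cis \<theta>) * sin (4*\<theta>) = -2 * (m1*(cos (4*\<theta>)-1) + m2*(cos (4*\<theta>)+1))"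
proof -
  have a: "0 < \<theta>" "\<theta> < pi / real (4::nat)" using assms by auto
  note pm = princ_mul[OF _ _ a] and sn = sin_shift_neg[OF _ _ a]
  define c where "c = cos \<theta>"
  define s where "s = sin \<theta>"
  define r where "r = sqrt 2"
  have cs: "c^2+s^2 = 1" by (simp add: c_def s_def)
  have r2: "r^2 = 2" by (simp add: r_def)
  have v: "real 1 * pi / real 4 = pi/4" "real 2 * pi / real 4 = pi/2" "real 3 * pi / real 4 = 3*pi/4"
     "real 4 * pi / real 4 = pi"
    by simp_all
  have e1h: "sph_princ 4 1 (cis \<theta>) * (s*(r/2) - c*(r/2)) = -(c*(r/2) + s*(r/2))"
   and d1h: "s*(r/2) - c*(r/2) < 0"
    using pm[of 1] sn[of 1] unfolding v by (simp_all add: sin_diff cos_diff cos_45 sin_45 c_def s_def r_def)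
  have e1: "sph_princ 4 1 (cis \<theta>) * (s * r - c * r) = - (c * r + s * r)" using e1h by (simp add: algebra_simps)
  have d1: "s * r - c * r \<noteq> 0"
  proof -
    have "s * r - c * r = 2 * (s*(r/2) - c*(r/2))" by (simp add: algebra_simps)
    thus ?thesis using d1h by linarith
  qed
  have e2: "sph_princ 4 2 (cis \<theta>) * c = s"
   and d2: "c \<noteq> 0"
    using pm[of 2] sn[of 2] unfolding v by (simp_all add: sin_diff cos_diff c_def s_def r_def)
  have e3h: "sph_princ 4 3 (cis \<theta>) * (s*(-r/2) - c*(r/2)) = -(c*(-r/2) + s*(r/2))"
   and d3h: "s*(-r/2) - c*(r/2) < 0"
    using pm[of 3] sn[of 3] unfolding v by (simp_all add: sin_diff cos_diff cos_135 sin_135 c_def s_def r_def)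
  have "sph_princ 4 3 (cis \<theta>) * (- s * r - c * r) = 2 * (sph_princ 4 3 (cis \<theta>) * (s*(-r/2) - c*(r/2)))"
    by (simp add: algebra_simps)
  also have "\<dots> = 2 * (-(c*(-r/2) + s*(r/2)))" by (simp only: e3h)
  also have "\<dots> = - (- c * r + s * r)" by (simp add: algebra_simps)
  finally have e3: "sph_princ 4 3 (cis \<theta>) * (- s * r - c * r) = - (- c * r + s * r)" .
  have d3: "- s * r - c * r \<noteq> 0" using d3h by (simp add: algebra_simps)
  have e4: "sph_princ 4 4 (cis \<theta>) * s = - c"
   and d4: "s \<noteq> 0"
    using pm[of 4] sn[of 4] unfolding v by (simp_all add: sin_diff cos_diff c_def s_def r_def)
  have S2: "sin (2*\<theta>) = 2 * s * c" and C2: "cos (2*\<theta>) = c^2 - s^2"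
    by (simp_all add: sin_double cos_double c_def s_def)
  have S4: "sin (4*\<theta>) = 2 * sin (2*\<theta>) * cos (2*\<theta>)" and C4: "cos (4*\<theta>) = cos (2*\<theta>)^2 - sin (2*\<theta>)^2"
    using sin_double[of "2*\<theta>"] cos_double[of "2*\<theta>"] by simp_all
  have sumH: "sph_H 4 m1 m2 (cis \<theta>) = m1 * sph_princ 4 1 (cis \<theta>) + m2 * sph_princ 4 2 (cis \<theta>)
      + m1 * sph_princ 4 3 (cis \<theta>) + m2 * sph_princ 4 4 (cis \<theta>)"
  proof -
    have "{1..4::nat} = {1,2,3,4}" by auto
    thus ?thesis by (simp add: sph_H_def iso_mult_def)
  qed
  show ?thesis unfolding sumH
    by (rule alg4[OF e1 e2 e3 e4 cs r2 _ _ d1 d2 d3 d4])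
       (simp_all add: S4 C4 S2 C2)
qed

lemma H3:
  assumes "0 < \<theta>" "\<theta> < pi / 3"
  shows "sph_H 3 m1 m1 (cis \<theta>) * sin (3*\<theta>) = -(3/2) * (m1*(cos (3*\<theta>)-1) + m1*(cos (3*\<theta>)+1))"
proof -
  have a: "0 < \<theta>" "\<theta> < pi / real (3::nat)" using assms by auto
  note pm = princ_mul[OF _ _ a] and sn = sin_shift_neg[OF _ _ a]
  define c where "c = cos \<theta>"
  define s where "s = sin \<theta>"
  define r where "r = sqrt 3"
  have cs: "c^2+s^2 = 1" by (simp add: c_def s_def)
  have r2: "r^2 = 3" by (simp add: r_def)
  have v: "real 1 * pi / real 3 = pi/3" "real 2 * pi / real 3 = 2*pi/3" "real 3 * pi / real 3 = pi"
    by simp_all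
  have e1h: "sph_princ 3 1 (cis \<theta>) * (s*(1/2) - c*(r/2)) = -(c*(1/2) + s*(r/2))"
   and d1h: "s*(1/2) - c*(r/2) < 0"
    using pm[of 1] sn[of 1] unfolding v by (simp_all add: sin_diff cos_diff cos_60 sin_60 c_def s_def r_def)
  have e1: "sph_princ 3 1 (cis \<theta>) * (s - c * r) = -(c + s * r)" using e1h by (simp add: algebra_simps)
  have d1: "s - c * r \<noteq> 0" using d1h by (simp add: algebra_simps)
  have e2h: "sph_princ 3 2 (cis \<theta>) * (s*(-1/2) - c*(r/2)) = -(c*(-1/2) + s*(r/2))"
   and d2h: "s*(-1/2) - c*(r/2) < 0"
    using pm[of 2] sn[of 2] unfolding v by (simp_all add: sin_diff cos_diff cos_120 sin_120 c_def s_def r_def)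
  have e2: "sph_princ 3 2 (cis \<theta>) * (- s - c * r) = - (- c + s * r)" using e2h by (simp add: algebra_simps)
  have d2: "- s - c * r \<noteq> 0" using d2h by (simp add: algebra_simps)
  have e3: "sph_princ 3 3 (cis \<theta>) * s = - c"
   and d3: "s \<noteq> 0"
    using pm[of 3] sn[of 3] unfolding v by (simp_all add: sin_diff cos_diff c_def s_def r_def)
  have S2: "sin (2*\<theta>) = 2 * s * c" and C2: "cos (2*\<theta>) = c^2 - s^2"
    by (simp_all add: sin_double cos_double c_def s_def)
  have S3: "sin (3*\<theta>) = sin (2*\<theta>) * c + cos (2*\<theta>) * s" and C3: "cos (3*\<theta>) = cos (2*\<theta>) * c - sin (2*\<theta>) * s"
    using sin_add[of "2*\<theta>" \<theta>] cos_add[of "2*\<theta>" \<theta>] by (simp_all add: c_def s_def algebra_simps)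
  have sumH: "sph_H 3 m1 m1 (cis \<theta>) = m1 * sph_princ 3 1 (cis \<theta>) + m1 * sph_princ 3 2 (cis \<theta>)
      + m1 * sph_princ 3 3 (cis \<theta>)"
  proof -
    have "{1..3::nat} = {1,2,3}" by auto
    thus ?thesis by (simp add: sph_H_def iso_mult_def)
  qed
  show ?thesis unfolding sumH
    by (rule alg3[OF e1 e2 e3 cs r2 _ _ d1 d2 d3])
       (simp_all add: S3 C3 S2 C2)
qed

lemma H2:
  assumes "0 < \<theta>" "\<theta> < pi / 2"
  shows "sph_H 2 m1 m2 (cis \<theta>) * sin (2*\<theta>) = -(2/2) * (m1*(cos (2*\<theta>)-1) + m2*(cos (2*\<theta>)+1))"
proof -
  have a: "0 < \<theta>" "\<theta> < pi / real (2::nat)" using assms by auto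
  note pm = princ_mul[OF _ _ a] and sn = sin_shift_neg[OF _ _ a]
  define c where "c = cos \<theta>"
  define s where "s = sin \<theta>"
  have cs: "c^2+s^2 = 1" by (simp add: c_def s_def)
  have v: "real 1 * pi / real 2 = pi/2" "real 2 * pi / real 2 = pi"
    by simp_all
  have e1: "sph_princ 2 1 (cis \<theta>) * c = s"
   and d1: "c \<noteq> 0"
    using pm[of 1] sn[of 1] unfolding v by (simp_all add: sin_diff cos_diff c_def s_def)
  have e2: "sph_princ 2 2 (cis \<theta>) * s = - c"
   and d2: "s \<noteq> 0"
    using pm[of 2] sn[of 2] unfolding v by (simp_all add: sin_diff cos_diff c_def s_def)
  have S2: "sin (2*\<theta>) = 2 * s * c" and C2: "cos (2*\<theta>) = c^2 - s^2"
    by (simp_all add: sin_double cos_double c_def s_def)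
  have sumH: "sph_H 2 m1 m2 (cis \<theta>) = m1 * sph_princ 2 1 (cis \<theta>) + m2 * sph_princ 2 2 (cis \<theta>)"
  proof -
    have "{1..2::nat} = {1,2}" by auto
    thus ?thesis by (simp add: sph_H_def iso_mult_def)
  qed
  show ?thesis unfolding sumH
    by (rule alg2[OF e1 e2 cs _ _ d1 d2]) (simp_all add: S2 C2)
qed

lemma H1:
  assumes "0 < \<theta>" "\<theta> < pi"
  shows "sph_H 1 m1 m1 (cis \<theta>) * sin \<theta> = -(1/2) * (m1*(cos \<theta>-1) + m1*(cos \<theta>+1))"
proof -
  have a: "0 < \<theta>" "\<theta> < pi / real (1::nat)" using assms by auto
  have e1: "sph_princ 1 1 (cis \<theta>) * sin \<theta> = - cos \<theta>"
   and d1: "sin \<theta> \<noteq> 0"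
    using princ_mul[OF _ _ a, of 1] sin_shift_neg[OF _ _ a, of 1] by simp_all
  have sumH: "sph_H 1 m1 m1 (cis \<theta>) = m1 * sph_princ 1 1 (cis \<theta>)"
    by (simp add: sph_H_def iso_mult_def)
  show ?thesis unfolding sumH by (rule alg1[OF e1 d1])
qed

lemma Hid:
  assumes "g \<in> {1,2,3,4,6}" "odd g \<longrightarrow> m1 = m2" "0 < \<theta>" "\<theta> < pi / real g"
  shows "sph_H g m1 m2 (cis \<theta>) * sin (real g * \<theta>) =
    -(real g/2) * (real m1 * (cos (real g * \<theta>) - 1) + real m2 * (cos (real g * \<theta>) + 1))"
proof -
  from assms(1) consider "g=1" | "g=2" | "g=3" | "g=4" | "g=6" by auto
  then show ?thesis
  proof cases
    case 1 thus ?thesis using assms H1[of \<theta> m1] by simp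
  next
    case 2 thus ?thesis using assms H2[of \<theta> m1 m2] by simp
  next
    case 3 thus ?thesis using assms H3[of \<theta> m1] by simp
  next
    case 4 thus ?thesis using assms H4[of \<theta> m1 m2] by simp
  next
    case 5 thus ?thesis using assms H6[of \<theta> m1 m2] by simp
  qed
qed


lemma chamber_cis:
  assumes "x \<in> weyl_chamber g" "cmod x = 1"
  shows "\<exists>\<theta>. x = cis \<theta> \<and> 0 < \<theta> \<and> \<theta> < pi / real g"
proof -
  from assms(1) obtain r \<theta> where x: "x = of_real r * cis \<theta>" "r > 0" "0 < \<theta>" "\<theta> < pi / real g"
    unfolding weyl_chamber_def by blast
  have "cmod x = r" using x by (simp add: norm_mult)
  hence "r = 1" using assms by simp
  thus ?thesis using x by auto
qed

lemma abs_sin_mult: "\<bar>sin (real n * x)\<bar> \<le> real n * \<bar>sin x\<bar>"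
proof (induction n)
  case 0 thus ?case by simp
next
  case (Suc n)
  have "sin (real (Suc n) * x) = sin (real n * x) * cos x + cos (real n * x) * sin x"
    by (simp add: distrib_right sin_add)
  hence "\<bar>sin (real (Suc n) * x)\<bar> \<le> \<bar>sin (real n * x)\<bar> * \<bar>cos x\<bar> + \<bar>cos (real n * x)\<bar> * \<bar>sin x\<bar>"
    by (simp add: abs_mult[symmetric])
  also have "\<dots> \<le> \<bar>sin (real n * x)\<bar> * 1 + 1 * \<bar>sin x\<bar>"
    by (intro add_mono mult_mono) auto
  also have "\<dots> \<le> real n * \<bar>sin x\<bar> + \<bar>sin x\<bar>" using Suc by simp
  finally show ?case by (simp add: algebra_simps)
qed

lemma princ_sq_bound:
  assumes "1 \<le> k" "k \<le> g" "0 < \<theta>" "\<theta> < pi / real g"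
  shows "(sph_princ g k (cis \<theta>))^2 * (sin (real g * \<theta>))^2 \<le> (real g)^2"
proof -
  define u where "u = \<theta> - real k * pi / real g"
  have su: "sin u \<noteq> 0" using sin_shift_neg[OF assms] u_def by simp
  have g0: "real g > 0" using assms by simp
  have "real g * u = real g * \<theta> - real k * pi" using g0 by (simp add: u_def field_simps)
  hence "sin (real g * u) = sin (real g * \<theta>) * (-1)^k" by (simp add: sin_diff)
  hence S: "(sin (real g * \<theta>))^2 = (sin (real g * u))^2" by (simp add: power_mult_distrib power_even_eq[symmetric] power_mult[symmetric] mult.commute[of k])
  have "(sin (real g * u))^2 \<le> (real g * \<bar>sin u\<bar>)^2"
    using abs_sin_mult[of g u] by (metis abs_ge_zero power2_abs power_mono)
  hence B: "(sin (real g * u))^2 \<le> (real g)^2 * (sin u)^2" by (simp add: power_mult_distrib)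
  have P: "sph_princ g k (cis \<theta>) = - cos u / sin u" by (simp add: princ_cis u_def)
  have "(sph_princ g k (cis \<theta>))^2 * (sin (real g * \<theta>))^2 = (cos u)^2 / (sin u)^2 * (sin (real g * u))^2"
    by (simp add: P S power_divide)
  also have "\<dots> \<le> (cos u)^2 / (sin u)^2 * ((real g)^2 * (sin u)^2)"
    by (intro mult_left_mono B) auto
  also have "\<dots> = (cos u)^2 * (real g)^2" using su by (simp add: field_simps)
  also have "\<dots> \<le> 1 * (real g)^2" by (intro mult_right_mono) (auto simp: abs_square_le_1)
  finally show ?thesis by simp
qed

lemma cos_ge_sin: "0 \<le> x \<Longrightarrow> x \<le> pi/4 \<Longrightarrow> sin x \<le> cos x"
  using sin_monotone_2pi_le[of x "pi/2 - x"] by (simp add: sin_cos_eq)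

lemma normA2_lower:
  assumes "2 \<le> g" "1 \<le> m1" "1 \<le> m2" "0 < \<theta>" "\<theta> < pi / real g"
  shows "1 \<le> sph_normA2 g m1 m2 (cis \<theta>)"
proof -
  let ?f = "\<lambda>k. real (iso_mult m1 m2 k) * (sph_princ g k (cis \<theta>))^2"
  have mk: "\<And>k. 1 \<le> real (iso_mult m1 m2 k)" using assms by (simp add: iso_mult_def)
  have nn: "\<And>k. 0 \<le> ?f k" using mk by (simp add: order_trans[OF zero_le_one])
  have "sum ?f {1, g} \<le> sum ?f {1..g}"
    by (rule sum_mono2) (use assms nn in auto)
  moreover have "sum ?f {1, g} = ?f 1 + ?f g" using assms by simp
  moreover have "(sph_princ g 1 (cis \<theta>))^2 \<le> ?f 1"
    using mk[of 1] by (metis mult_le_cancel_right1 zero_le_power2 mult.commute order.trans le_square mult_1_left mult_right_mono)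
  moreover have "(sph_princ g g (cis \<theta>))^2 \<le> ?f g"
    using mk[of g] by (metis mult_1_left mult_right_mono zero_le_power2)
  moreover have "1 \<le> (sph_princ g 1 (cis \<theta>))^2 + (sph_princ g g (cis \<theta>))^2"
  proof (cases "\<theta> \<le> pi/4")
    case True
    have "0 < sin \<theta>" using assms True by (intro sin_gt_zero) auto
    moreover have "sin \<theta> \<le> cos \<theta>" using True assms by (intro cos_ge_sin) auto
    ultimately have "1 \<le> cos \<theta> / sin \<theta>" by simp
    hence "1 \<le> (cos \<theta> / sin \<theta>)^2" by (metis one_le_power)
    moreover have "sph_princ g g (cis \<theta>) = - (cos \<theta> / sin \<theta>)"
      using assms by (simp add: princ_cis)
    ultimately show ?thesis by (simp add: add_increasing)
  next
    case False
    define v where "v = pi / real g - \<theta>"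
    have g2: "pi / real g \<le> pi / 2" using assms by (intro divide_left_mono) auto
    have v: "0 < v" "v \<le> pi/4" using assms(5) False g2 unfolding v_def by linarith+
    have "0 < sin v" using v by (intro sin_gt_zero) auto
    moreover have "sin v \<le> cos v" using v by (intro cos_ge_sin) auto
    ultimately have "1 \<le> cos v / sin v" by simp
    hence "1 \<le> (cos v / sin v)^2" by (metis one_le_power)
    moreover have "sph_princ g 1 (cis \<theta>) = cos v / sin v"
    proof -
      have "\<theta> - real 1 * pi / real g = - v" by (simp add: v_def)
      thus ?thesis by (simp add: princ_cis)
    qed
    ultimately show ?thesis by (simp add: add_increasing2)
  qed
  ultimately show ?thesis unfolding sph_normA2_def by linarith
qed


lemma W_deriv:
  fixes N K :: real
  assumes mcf: "sph_MCF g m1 m2 y" and g1: "1 \<le> g" and t: "t \<le> 0"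
  shows "((\<lambda>t. N * Re (y t ^ g) + K) has_field_derivative
           (N * (- real g * sph_H g m1 m2 (y t) * Im (y t ^ g)))) (at t within {..0})"
proof -
  let ?H = "sph_H g m1 m2 (y t)"
  have ym: "cmod (y t) = 1" and D0: "(y has_vector_derivative sph_Hvec g m1 m2 (y t)) (at t within {..0})"
    using mcf t unfolding sph_MCF_def by auto
  have v: "sph_Hvec g m1 m2 (y t) = of_real ?H * (\<i> * y t)"
    using ym by (simp add: sph_Hvec_def sph_normal_def)
  have D1: "(y has_derivative (\<lambda>h. h *\<^sub>R (of_real ?H * (\<i> * y t)))) (at t within {..0})"
    using D0 unfolding has_vector_derivative_def v .
  note D2 = has_derivative_power[OF D1, of g]
  note D3 = has_derivative_Re[OF D2]
  have yy: "y t * y t ^ (g - 1) = y t ^ g" using g1 by (metis Suc_diff_le diff_Suc_1 power_Suc)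
  have eq: "\<And>h. Re (of_nat g * (h *\<^sub>R (of_real ?H * (\<i> * y t))) * y t ^ (g - 1))
      = (- real g * ?H * Im (y t ^ g)) * h"
  proof -
    fix h :: real
    have "of_nat g * (h *\<^sub>R (of_real ?H * (\<i> * y t))) * y t ^ (g - 1)
        = of_real (real g * ?H * h) * \<i> * (y t * y t ^ (g - 1))"
      by (simp add: scaleR_conv_of_real algebra_simps)
    also have "\<dots> = of_real (real g * ?H * h) * \<i> * y t ^ g" by (simp only: yy)
    finally show "Re (of_nat g * (h *\<^sub>R (of_real ?H * (\<i> * y t))) * y t ^ (g - 1))
      = (- real g * ?H * Im (y t ^ g)) * h" by simp
  qed
  have D4: "((\<lambda>t. Re (y t ^ g)) has_field_derivative (- real g * ?H * Im (y t ^ g))) (at t within {..0})"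
    unfolding has_field_derivative_def
    by (rule has_derivative_eq_rhs[OF D3]) (intro ext, rule eq)
  show ?thesis
    by (rule derivative_eq_intros D4 | simp)+
qed

lemma W_const:
  fixes N K :: real and W :: "real \<Rightarrow> real"
  assumes mcf: "sph_MCF g m1 m2 y" and g1: "1 \<le> g"
    and Wdef: "\<And>t. W t = N * Re (y t ^ g) + K"
    and iden: "\<And>t. t \<le> 0 \<Longrightarrow> sph_H g m1 m2 (y t) * Im (y t ^ g) = - W t"
    and t: "t \<le> 0"
  shows "W t = W 0 * exp (real g * N * t)"
proof -
  have "\<exists>c. \<forall>x\<in>{..0}. exp (- (real g * N) * x) * W x = c"
  proof (rule has_field_derivative_zero_constant)
    fix x :: real assume x: "x \<in> {..0}"
    have DW: "(W has_field_derivative (real g * N * W x)) (at x within {..0})"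
    proof -
      have "(W has_field_derivative (N * (- real g * sph_H g m1 m2 (y x) * Im (y x ^ g)))) (at x within {..0})"
        using W_deriv[OF mcf g1, of x N K] x by (simp add: Wdef[abs_def])
      moreover have "N * (- real g * sph_H g m1 m2 (y x) * Im (y x ^ g)) = real g * N * W x"
        using iden[of x] x by (simp add: algebra_simps)
      ultimately show ?thesis by simp
    qed
    show "((\<lambda>x. exp (- (real g * N) * x) * W x) has_field_derivative 0) (at x within {..0})"
      by (rule derivative_eq_intros DW refl | simp)+
  qed auto
  then obtain c where c: "\<forall>x\<in>{..0}. exp (- (real g * N) * x) * W x = c" by blast
  have c1: "exp (- (real g * N) * t) * W t = c" using c t by blast
  have c0: "exp (- (real g * N) * 0) * W 0 = c" using c by blast
  have "exp (- (real g * N) * t) * W t = exp (- (real g * N) * 0) * W 0" using c1 c0 by simp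
  hence "exp (- (real g * N) * t) * W t = W 0" by simp
  hence "W t = W 0 / exp (- (real g * N) * t)" by (simp add: field_simps)
  thus ?thesis by (simp add: exp_minus field_simps)
qed


theorem corollary4p15:
  fixes g m1 m2 n :: nat and y :: "real \<Rightarrow> complex"
  assumes "iso_data g m1 m2 n"
    and "sph_MCF g m1 m2 y"
    and "sph_H g m1 m2 (y 0) \<noteq> 0"
  shows "(g = 1 \<longrightarrow> (\<forall>t\<le>0. sph_normA2 g m1 m2 (y t) / (sph_H g m1 m2 (y t))^2 = 1 / real n))
       \<and> (g \<ge> 2 \<longrightarrow> (\<exists>t1>0. \<exists>c1>0. \<exists>c2>0. \<forall>t< -t1.
            c2 * exp (- 2 * real g * real n * t) \<le> sph_normA2 g m1 m2 (y t) / (sph_H g m1 m2 (y t))^2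
          \<and> sph_normA2 g m1 m2 (y t) / (sph_H g m1 m2 (y t))^2 \<le> c1 * exp (- 2 * real g * real n * t)))"
proof -
  have gset: "g \<in> {1,2,3,4,6}" and m1: "1 \<le> m1" and m12: "m1 \<le> m2" and odd: "odd g \<longrightarrow> m1 = m2"
    and nn: "(m1 + m2) * g = 2 * n" using assms(1) unfolding iso_data_def by auto
  have g1: "1 \<le> g" using gset by auto
  have m2: "1 \<le> m2" using m1 m12 by simp
  have nreal: "real n = real g * (real m1 + real m2) / 2"
  proof -
    have "real ((m1 + m2) * g) = real (2 * n)" using nn by simp
    hence "(real m1 + real m2) * real g = 2 * real n" by simp
    thus ?thesis by (simp add: algebra_simps)
  qed
  have "0 < (m1 + m2) * g" using m1 g1 by simp
  hence "0 < n" using nn by simp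
  hence npos: "real n > 0" by simp
  have gpos: "real g > 0" using g1 by simp
  have mcf: "sph_MCF g m1 m2 y" by (rule assms(2))
  have "\<forall>t. \<exists>\<theta>. t \<le> 0 \<longrightarrow> y t = cis \<theta> \<and> 0 < \<theta> \<and> \<theta> < pi / real g"
    using chamber_cis mcf unfolding sph_MCF_def by metis
  then obtain th where th: "\<And>t. t \<le> 0 \<Longrightarrow> y t = cis (th t) \<and> 0 < th t \<and> th t < pi / real g"
    by metis
  define K where "K = real g / 2 * (real m2 - real m1)"
  define W where "W t = real n * Re (y t ^ g) + K" for t
  define S where "S t = sin (real g * th t)" for t
  have ReIm: "Re (y t ^ g) = cos (real g * th t)" "Im (y t ^ g) = S t" if "t \<le> 0" for t
    using th[OF that] by (simp_all add: Complex.DeMoivre S_def)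
  have Spos: "S t > 0" if "t \<le> 0" for t
  proof -
    have "real g * th t < real g * (pi / real g)" using th[OF that] gpos by (intro mult_strict_left_mono) auto
    hence "real g * th t < pi" using gpos by simp
    thus ?thesis unfolding S_def using th[OF that] gpos by (intro sin_gt_zero) auto
  qed
  have iden: "sph_H g m1 m2 (y t) * Im (y t ^ g) = - W t" if "t \<le> 0" for t
  proof -
    have "sph_H g m1 m2 (cis (th t)) * sin (real g * th t) =
      -(real g/2) * (real m1 * (cos (real g * th t) - 1) + real m2 * (cos (real g * th t) + 1))"
      using Hid[OF gset odd] th[OF that] by blast
    moreover have "-(real g/2) * (real m1 * (cos (real g * th t) - 1) + real m2 * (cos (real g * th t) + 1))
       = - (real n * cos (real g * th t) + K)"
      unfolding nreal K_def by (simp add: field_simps)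
    ultimately show ?thesis using th[OF that] ReIm[OF that] unfolding W_def S_def
      by simp
  qed
  have Wexp: "W t = W 0 * exp (real g * real n * t)" if "t \<le> 0" for t
    by (rule W_const[OF mcf g1 W_def iden that])
  define w0 where "w0 = W 0"
  have w0: "w0 \<noteq> 0"
  proof
    assume "w0 = 0"
    hence "sph_H g m1 m2 (y 0) * S 0 = 0" using iden[of 0] ReIm[of 0] w0_def by simp
    thus False using assms(3) Spos[of 0] by simp
  qed
  have Wne: "W t \<noteq> 0" if "t \<le> 0" for t using Wexp[OF that] w0 w0_def by simp
  have Hval: "sph_H g m1 m2 (y t) = - W t / S t" if "t \<le> 0" for t
    using iden[OF that] ReIm[OF that] Spos[OF that] by (simp add: field_simps)
  have Hne: "sph_H g m1 m2 (y t) \<noteq> 0" if "t \<le> 0" for t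
    using Hval[OF that] Wne[OF that] Spos[OF that] by simp
  have ratio: "sph_normA2 g m1 m2 (y t) / (sph_H g m1 m2 (y t))^2
      = sph_normA2 g m1 m2 (y t) * (S t)^2 / w0^2 * exp (- 2 * real g * real n * t)" if "t \<le> 0" for t
  proof -
    have e: "exp (- 2 * real g * real n * t) * (exp (real g * real n * t))^2 = 1"
      by (simp add: power2_eq_square exp_add[symmetric])
    have "sph_normA2 g m1 m2 (y t) / (sph_H g m1 m2 (y t))^2
        = sph_normA2 g m1 m2 (y t) * (S t)^2 / (w0^2 * (exp (real g * real n * t))^2)"
      using Spos[OF that] Wexp[OF that] w0 unfolding Hval[OF that] w0_def
      by (simp add: power_divide power_mult_distrib field_simps)
    also have "\<dots> = sph_normA2 g m1 m2 (y t) * (S t)^2 / w0^2 * exp (- 2 * real g * real n * t)"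
      using e w0 by (simp add: field_simps)
    finally show ?thesis .
  qed
  show ?thesis
  proof (intro conjI impI)
    assume g: "g = 1"
    show "\<forall>t\<le>0. sph_normA2 g m1 m2 (y t) / (sph_H g m1 m2 (y t))^2 = 1 / real n"
    proof (intro allI impI)
      fix t :: real assume t: "t \<le> 0"
      have mm: "m1 = m2" using odd g by simp
      have nm: "real n = real m1" using nreal g mm by simp
      have "sph_H g m1 m2 (y t) \<noteq> 0" by (rule Hne[OF t])
      thus "sph_normA2 g m1 m2 (y t) / (sph_H g m1 m2 (y t))^2 = 1 / real n"
        using g nm m1 by (simp add: sph_normA2_def sph_H_def iso_mult_def power2_eq_square field_simps)
    qed
  next
    assume g2: "2 \<le> g"
    define \<beta> where "\<beta> = K / real n"
    have gm: "real g * real m1 > 0" using gpos m1 by simp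
    have e1: "K = (real g * real m2 - real g * real m1)/2" unfolding K_def by (simp add: algebra_simps)
    have e2: "real n = (real g * real m1 + real g * real m2)/2" unfolding nreal by (simp add: algebra_simps)
    have K0: "0 \<le> K" unfolding K_def using m12 by simp
    have aux: "\<And>a b k m::real. 0 < b \<Longrightarrow> k = (a - b)/2 \<Longrightarrow> m = (b + a)/2 \<Longrightarrow> k < m" by simp
    have Kn: "K < real n" by (rule aux[OF gm e1 e2])
    have \<beta>: "0 \<le> \<beta>" "\<beta> < 1" unfolding \<beta>_def using K0 Kn npos by (simp_all add: field_simps)
    define \<eta> where "\<eta> = (1 - \<beta>) / 2"
    define q where "q = \<beta> + \<eta>"
    have \<eta>: "\<eta> > 0" and q: "0 \<le> q" "q < 1" using \<beta> unfolding \<eta>_def q_def by (auto simp: field_simps)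
    define \<epsilon> where "\<epsilon> = 1 - q^2"
    have \<epsilon>: "\<epsilon> > 0" using q unfolding \<epsilon>_def by (simp add: power_less_one_iff abs_square_less_1)
    define L where "L = ln (\<bar>w0\<bar> / (\<eta> * real n))"
    define t1 where "t1 = 1 + \<bar>L\<bar> / (real g * real n)"
    have t1: "t1 > 0" unfolding t1_def using gpos npos by (simp add: add_pos_nonneg)
    have Supper: "sph_normA2 g m1 m2 (y t) * (S t)^2 \<le> real g * real m2 * (real g)^2" if t: "t \<le> 0" for t
    proof -
      have "sph_normA2 g m1 m2 (y t) * (S t)^2
          = (\<Sum>k=1..g. real (iso_mult m1 m2 k) * ((sph_princ g k (y t))^2 * (S t)^2))"
        unfolding sph_normA2_def by (simp add: sum_distrib_right mult.assoc)
      also have "\<dots> \<le> (\<Sum>k=1..g. real m2 * (real g)^2)"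
      proof (rule sum_mono)
        fix k assume k: "k \<in> {1..g}"
        have "(sph_princ g k (y t))^2 * (S t)^2 \<le> (real g)^2"
          using princ_sq_bound[of k g "th t"] k th[OF t] unfolding S_def by auto
        moreover have "real (iso_mult m1 m2 k) \<le> real m2" using m12 by (simp add: iso_mult_def)
        ultimately show "real (iso_mult m1 m2 k) * ((sph_princ g k (y t))^2 * (S t)^2) \<le> real m2 * (real g)^2"
          by (intro mult_mono) auto
      qed
      also have "\<dots> = real g * real m2 * (real g)^2" by simp
      finally show ?thesis .
    qed
    have Slower: "\<epsilon> \<le> sph_normA2 g m1 m2 (y t) * (S t)^2" if t: "t < - t1" for t
    proof -
      have t0: "t \<le> 0" using t t1 by simp
      have A1: "1 \<le> sph_normA2 g m1 m2 (y t)"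
        using normA2_lower[OF g2 m1 m2, of "th t"] th[OF t0] by auto
      have "real g * real n * t < real g * real n * (- t1)"
        using t gpos npos by (intro mult_strict_left_mono) auto
      also have "\<dots> = - (real g * real n) - \<bar>L\<bar>" unfolding t1_def using gpos npos by (simp add: field_simps)
      also have "\<dots> \<le> - L" using mult_pos_pos[OF gpos npos] abs_ge_self[of L] by linarith
      finally have "exp (real g * real n * t) < exp (- L)" by simp
      also have "exp (- L) = \<eta> * real n / \<bar>w0\<bar>"
        unfolding L_def using w0 \<eta> npos by (simp add: exp_minus ln_div exp_diff)
      finally have "\<bar>w0\<bar> * exp (real g * real n * t) < \<eta> * real n"
        using w0 by (simp add: field_simps)
      hence Wb: "\<bar>W t\<bar> < \<eta> * real n" using Wexp[OF t0] w0_def by (simp add: abs_mult)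
      have "cos (real g * th t) = (W t - K) / real n"
        using ReIm(1)[OF t0] npos unfolding W_def by (simp add: field_simps)
      hence "\<bar>cos (real g * th t)\<bar> \<le> \<bar>W t\<bar> / real n + \<beta>"
        using npos \<beta> unfolding \<beta>_def by (simp add: diff_divide_distrib abs_triangle_ineq4 order_trans[OF abs_triangle_ineq4])
      also have "\<dots> < q" using Wb npos unfolding q_def by (simp add: field_simps)
      finally have cq: "\<bar>cos (real g * th t)\<bar> < q" .
      have "(cos (real g * th t))^2 \<le> q^2"
        using cq by (metis abs_ge_zero less_imp_le power2_abs power_mono)
      hence "\<epsilon> \<le> (S t)^2" unfolding \<epsilon>_def S_def using sin_squared_eq[of "real g * th t"] by linarith
      also have "\<dots> \<le> sph_normA2 g m1 m2 (y t) * (S t)^2"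
        using A1 by (simp add: mult_le_cancel_right1)
      finally show ?thesis .
    qed
    show "\<exists>t1>0. \<exists>c1>0. \<exists>c2>0. \<forall>t< -t1.
            c2 * exp (- 2 * real g * real n * t) \<le> sph_normA2 g m1 m2 (y t) / (sph_H g m1 m2 (y t))^2
          \<and> sph_normA2 g m1 m2 (y t) / (sph_H g m1 m2 (y t))^2 \<le> c1 * exp (- 2 * real g * real n * t)"
    proof (intro exI conjI allI impI)
      show "t1 > 0" by (rule t1)
      show "real g * real m2 * (real g)^2 / w0^2 > 0" using gpos m2 w0 by simp
      show "\<epsilon> / w0^2 > 0" using \<epsilon> w0 by simp
    next
      fix t assume t: "t < - t1"
      have t0: "t \<le> 0" using t t1 by simp
      have w2: "w0^2 > 0" using w0 by simp
      show "\<epsilon> / w0^2 * exp (- 2 * real g * real n * t) \<le> sph_normA2 g m1 m2 (y t) / (sph_H g m1 m2 (y t))^2"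
        unfolding ratio[OF t0] using Slower[OF t] w2
        by (intro mult_right_mono divide_right_mono) auto
      show "sph_normA2 g m1 m2 (y t) / (sph_H g m1 m2 (y t))^2 \<le> real g * real m2 * (real g)^2 / w0^2 * exp (- 2 * real g * real n * t)"
        unfolding ratio[OF t0] using Supper[OF t0] w2
        by (intro mult_right_mono divide_right_mono) auto
    qed
  qed
qed

end
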